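(* Consider the LSTM network \[ \begin{aligned} x^+ &= \sigma_g(W_f u + U_f \xi + b_f)\circ x + \sigma_g(W_i u + U_i \xi + b_i)\circ \sigma_c(W_c u + U_c \xi + b_c),\\ \xi^+ &= \sigma_g(W_o u + U_o \xi + b_o)\circ \sigma_c(x^+),\qquad y = C\xi + b_y, \end{aligned} \] with state $\chi=(x,\xi)$ and inputs in $\mathcal{U}=[-u_{\max},u_{\max}]^{n_u}$. Let \[ \alpha=\tfrac14\|U_f\|\frac{\bar{\sigma}_g^i\bar{\sigma}_c^c}{1-\bar{\sigma}_g^f}+\bar{\sigma}_g^i\|U_c\|+\tfrac14\|U_i\|\bar{\sigma}_c^c,\qquad A_\delta=\begin{bmatrix}\bar{\sigma}_g^f & \alpha\\ \bar{\sigma}_g^o\bar{\sigma}_g^f & \alpha\bar{\sigma}_g^o+\tfrac14\bar{\sigma}_c^x\|U_o\|\end{bmatrix}. \] If $\rho(A_\delta)<1$, then the network is incrementally input-to-state stable ($\delta$ISS): there exist $\beta_\delta\in\mathcal{KL}$ and $\gamma_\delta\in\mathcal{K}_\infty$ such that for every $k\in\mathbb{Z}_{\ge0}$, all initial states $\chi_{01},\chi_{02}\in\mathcal{X}$ and all input sequences $u_1(\cdot),u_2(\cdot)$ with values in $\mathcal{U}$, the corresponding solutions satisfy \[ \|\chi_1(k)-\chi_2(k)\|\le\beta_\delta(\|\chi_{01}-\chi_{02}\|,k)+\gamma_\delta\big(\max_{h\ge0}\|u_1(h)-u_2(h)\|\big). \]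
   Context: $\sigma_g(t)=1/(1+e^{-t})$, $\sigma_c=\tanh$, applied entrywise; $\circ$ is the Hadamard product. $\|\cdot\|$ is the Euclidean/induced 2-norm, $\|\cdot\|_\infty$ the induced $\infty$-norm, $\rho$ the spectral radius. For $\star\in\{f,i,o\}$, $\bar{\sigma}_g^\star=\sigma_g(\|[W_\star u_{\max}\ U_\star\ b_\star]\|_\infty)$ (horizontal concatenation); $\bar{\sigma}_c^c=\sigma_c(\|[W_c u_{\max}\ U_c\ b_c]\|_\infty)$; $\bar{\sigma}_c^x=\sigma_c\big(\bar{\sigma}_g^i\bar{\sigma}_c^c/(1-\bar{\sigma}_g^f)\big)$. The state set is $\mathcal{X}=\{(x,\xi):|x_{(j)}|\le\bar{\sigma}_g^i\bar{\sigma}_c^c/(1-\bar{\sigma}_g^f),\ \xi_{(j)}\in(-1,1),\ j=1,\dots,n_x\}$. $\mathcal{K},\mathcal{K}_\infty,\mathcal{KL}$ are the standard comparison-function classes. *)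

theory Defs
  imports "HOL-Analysis.Analysis"
begin

definition sigma_g :: "real \<Rightarrow> real" where
  "sigma_g t = 1 / (1 + exp (- t))"

definition sigma_c :: "real \<Rightarrow> real" where
  "sigma_c t = tanh t"

definition vmap :: "(real \<Rightarrow> real) \<Rightarrow> real^'n \<Rightarrow> real^'n" where
  "vmap f v = (\<chi> i. f (v $ i))"

definition hadamard :: "real^'n \<Rightarrow> real^'n \<Rightarrow> real^'n" (infixl "\<circ>\<^sub>H" 70) where
  "a \<circ>\<^sub>H b = (\<chi> i. a $ i * b $ i)"

record ('x, 'u) lstm =
  Wf :: "real^'u^'x"  Uf :: "real^'x^'x"  bf :: "real^'x"
  Wi :: "real^'u^'x"  Ui :: "real^'x^'x"  bi :: "real^'x"
  Wo :: "real^'u^'x"  Uo :: "real^'x^'x"  bo :: "real^'x"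
  Wc :: "real^'u^'x"  Uc :: "real^'x^'x"  bc :: "real^'x"

definition lstm_step ::
  "('x::finite, 'u::finite) lstm \<Rightarrow> real^'u \<Rightarrow> ((real^'x) \<times> (real^'x)) \<Rightarrow> ((real^'x) \<times> (real^'x))" where
  "lstm_step N u s =
     (let x = fst s; \<xi> = snd s;
          xp = vmap sigma_g (Wf N *v u + Uf N *v \<xi> + bf N) \<circ>\<^sub>H x
             + vmap sigma_g (Wi N *v u + Ui N *v \<xi> + bi N) \<circ>\<^sub>H vmap sigma_c (Wc N *v u + Uc N *v \<xi> + bc N);
          \<xi>p = vmap sigma_g (Wo N *v u + Uo N *v \<xi> + bo N) \<circ>\<^sub>H vmap sigma_c xp
      in (xp, \<xi>p))"

primrec lstm_traj ::
  "('x::finite, 'u::finite) lstm \<Rightarrow> (nat \<Rightarrow> real^'u) \<Rightarrow> ((real^'x) \<times> (real^'x)) \<Rightarrow> nat \<Rightarrow> ((real^'x) \<times> (real^'x))" where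
  "lstm_traj N u s0 0 = s0"
| "lstm_traj N u s0 (Suc k) = lstm_step N (u k) (lstm_traj N u s0 k)"

definition mnorm2 :: "real^'m^'n \<Rightarrow> real" where
  "mnorm2 A = onorm (\<lambda>v. A *v v)"

text \<open>Induced infinity-norm (max absolute row sum) of the horizontal
  concatenation [W u_max, U, b].\<close>
definition cat_inf_norm :: "real \<Rightarrow> real^'u^'x \<Rightarrow> real^'x^'x \<Rightarrow> real^'x \<Rightarrow> real" where
  "cat_inf_norm umax W U b =
     Max (range (\<lambda>j::'x. (\<Sum>k\<in>UNIV. \<bar>umax * W $ j $ k\<bar>) + (\<Sum>l\<in>UNIV. \<bar>U $ j $ l\<bar>) + \<bar>b $ j\<bar>))"

definition sgbar_f :: "('x::finite, 'u::finite) lstm \<Rightarrow> real \<Rightarrow> real" where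
  "sgbar_f N umax = sigma_g (cat_inf_norm umax (Wf N) (Uf N) (bf N))"
definition sgbar_i :: "('x::finite, 'u::finite) lstm \<Rightarrow> real \<Rightarrow> real" where
  "sgbar_i N umax = sigma_g (cat_inf_norm umax (Wi N) (Ui N) (bi N))"
definition sgbar_o :: "('x::finite, 'u::finite) lstm \<Rightarrow> real \<Rightarrow> real" where
  "sgbar_o N umax = sigma_g (cat_inf_norm umax (Wo N) (Uo N) (bo N))"
definition scbar_c :: "('x::finite, 'u::finite) lstm \<Rightarrow> real \<Rightarrow> real" where
  "scbar_c N umax = sigma_c (cat_inf_norm umax (Wc N) (Uc N) (bc N))"
definition scbar_x :: "('x::finite, 'u::finite) lstm \<Rightarrow> real \<Rightarrow> real" where
  "scbar_x N umax = sigma_c (sgbar_i N umax * scbar_c N umax / (1 - sgbar_f N umax))"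

definition state_set :: "('x::finite, 'u::finite) lstm \<Rightarrow> real \<Rightarrow> ((real^'x) \<times> (real^'x)) set" where
  "state_set N umax = {(x, \<xi>). \<forall>j.
      \<bar>x $ j\<bar> \<le> sgbar_i N umax * scbar_c N umax / (1 - sgbar_f N umax)
      \<and> \<xi> $ j \<in> {-1<..<1}}"

definition input_set :: "real \<Rightarrow> (real^'u) set" where
  "input_set umax = {u. \<forall>j. u $ j \<in> {-umax..umax}}"

definition spectral_radius :: "real^'n^'n \<Rightarrow> real" where
  "spectral_radius A = Max {cmod z | z. \<exists>v::complex^'n. v \<noteq> 0 \<and>
       (\<chi> i j. complex_of_real (A $ i $ j)) *v v = (\<chi> i. z * v $ i)}"

definition A_delta :: "('x::finite, 'u::finite) lstm \<Rightarrow> real \<Rightarrow> real^2^2" where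
  "A_delta N umax =
     (let sf = sgbar_f N umax; si = sgbar_i N umax; so = sgbar_o N umax;
          sc = scbar_c N umax; sx = scbar_x N umax;
          \<alpha> = 1/4 * mnorm2 (Uf N) * (si * sc / (1 - sf)) + si * mnorm2 (Uc N)
              + 1/4 * mnorm2 (Ui N) * sc
      in (\<chi> i j. if i = 1 then (if j = 1 then sf else \<alpha>)
                  else (if j = 1 then so * sf else \<alpha> * so + 1/4 * sx * mnorm2 (Uo N))))"

definition class_K :: "(real \<Rightarrow> real) \<Rightarrow> bool" where
  "class_K f \<longleftrightarrow> continuous_on {0..} f \<and> strict_mono_on {0..} f \<and> f 0 = 0"

definition class_Kinf :: "(real \<Rightarrow> real) \<Rightarrow> bool" where
  "class_Kinf f \<longleftrightarrow> class_K f \<and> filterlim f at_top at_top"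

definition class_KL :: "(real \<Rightarrow> nat \<Rightarrow> real) \<Rightarrow> bool" where
  "class_KL \<beta> \<longleftrightarrow> (\<forall>t. class_K (\<lambda>s. \<beta> s t)) \<and>
     (\<forall>s\<ge>0. antimono (\<lambda>t. \<beta> s t) \<and> (\<lambda>t. \<beta> s t) \<longlonglongrightarrow> 0)"

end

theory Submission
  imports Defs "HOL-Computational_Algebra.Polynomial"
begin

lemma tanh_lip_aux:
  fixes x y :: real assumes "x \<le> y"
  shows "tanh y - tanh x \<le> y - x"
proof -
  have "(\<lambda>t. t - tanh t) x \<le> (\<lambda>t. t - tanh t) y"
    apply (rule DERIV_nonneg_imp_nondecreasing[OF assms])
    apply (rule exI[of _ "1 - (1 - tanh _ ^ 2)"])
    apply (auto intro!: derivative_eq_intros)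
    done
  then show ?thesis by simp
qed

lemma tanh_lip: "\<bar>tanh (x::real) - tanh y\<bar> \<le> \<bar>x - y\<bar>"
proof (cases "x \<le> y")
  case True
  then show ?thesis using tanh_lip_aux[OF True] by (auto simp: abs_if)
next
  case False
  then have "y \<le> x" by simp
  then show ?thesis using tanh_lip_aux[OF \<open>y \<le> x\<close>] by (auto simp: abs_if)
qed

lemma sigma_g_tanh: "sigma_g t = (1 + tanh (t/2)) / 2"
proof -
  have p: "1 + exp (- t) > 0" by (simp add: add_pos_pos)
  have "(1 + (1 - exp (- t)) / (1 + exp (- t))) / 2 = 1 / (1 + exp (- t))"
    using p by (simp add: field_simps)
  then show ?thesis unfolding sigma_g_def tanh_real_altdef using p by (simp add: field_simps)
qed

lemma sigma_g_pos: "0 < sigma_g t"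
  unfolding sigma_g_tanh using tanh_real_bounds[of "t/2"] by auto

lemma sigma_g_lt1: "sigma_g t < 1"
  unfolding sigma_g_tanh using tanh_real_bounds[of "t/2"] by auto

lemma sigma_g_mono: "s \<le> t \<Longrightarrow> sigma_g s \<le> sigma_g t"
  unfolding sigma_g_tanh by simp

lemma sigma_g_lip: "\<bar>sigma_g s - sigma_g t\<bar> \<le> 1/4 * \<bar>s - t\<bar>"
proof -
  have "\<bar>tanh (s/2) - tanh (t/2)\<bar> \<le> \<bar>s/2 - t/2\<bar>" by (rule tanh_lip)
  then show ?thesis unfolding sigma_g_tanh by (simp add: field_simps abs_if split: if_splits)
qed

lemma sigma_c_lip: "\<bar>sigma_c s - sigma_c t\<bar> \<le> 1 * \<bar>s - t\<bar>"
  unfolding sigma_c_def using tanh_lip by simp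

lemma sigma_c_abs_le: "\<bar>s\<bar> \<le> c \<Longrightarrow> \<bar>sigma_c s\<bar> \<le> sigma_c c"
  unfolding sigma_c_def by (metis tanh_real_abs tanh_real_le_iff)

lemma hadamard_comp [simp]: "(a \<circ>\<^sub>H b) $ i = a $ i * b $ i"
  unfolding hadamard_def by simp

lemma vmap_comp [simp]: "vmap f v $ i = f (v $ i)"
  unfolding vmap_def by simp

lemma norm_hadamard:
  fixes a b :: "real^'n::finite"
  assumes "\<And>j. \<bar>a $ j\<bar> \<le> c"
  shows "norm (a \<circ>\<^sub>H b) \<le> c * norm b"
proof -
  have c0: "c \<ge> 0" using assms[of undefined] by simp
  have "norm (a \<circ>\<^sub>H b) \<le> norm (c *\<^sub>R b)"
    by (rule norm_le_componentwise_cart)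
       (use assms c0 in \<open>auto simp: abs_mult intro: mult_right_mono\<close>)
  then show ?thesis using c0 by simp
qed

lemma norm_vmap_lip:
  fixes v w :: "real^'n::finite"
  assumes "\<And>s t. \<bar>f s - f t\<bar> \<le> L * \<bar>s - t\<bar>" and "L \<ge> 0"
  shows "norm (vmap f v - vmap f w) \<le> L * norm (v - w)"
proof -
  have "norm (vmap f v - vmap f w) \<le> norm (L *\<^sub>R (v - w))"
    by (rule norm_le_componentwise_cart)
       (use assms in \<open>auto simp: abs_mult\<close>)
  then show ?thesis using assms by simp
qed

lemma mnorm2_bound: "norm (A *v v) \<le> mnorm2 A * norm v"
  unfolding mnorm2_def by (rule onorm[OF matrix_vector_mul_bounded_linear])

lemma mnorm2_nonneg: "mnorm2 A \<ge> 0"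
  unfolding mnorm2_def by (rule onorm_pos_le[OF matrix_vector_mul_bounded_linear])

lemma cat_inf_norm_ge:
  fixes W :: "real^'u::finite^'x::finite"
  shows "(\<Sum>k\<in>UNIV. \<bar>umax * W $ j $ k\<bar>) + (\<Sum>l\<in>UNIV. \<bar>U $ j $ l\<bar>) + \<bar>b $ j\<bar> \<le> cat_inf_norm umax W U b"
  unfolding cat_inf_norm_def by (rule Max_ge) auto

lemma cat_inf_norm_nonneg: "cat_inf_norm umax W U b \<ge> 0"
  by (rule order_trans[OF _ cat_inf_norm_ge[where umax=umax and W=W and U=U and b=b and j=undefined]])
     (auto intro!: add_nonneg_nonneg sum_nonneg)

lemma arg_bound:
  fixes W :: "real^'u::finite^'x::finite" and U :: "real^'x^'x"
  assumes "u \<in> input_set umax" and "\<And>j. \<bar>\<xi> $ j\<bar> \<le> 1"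
  shows "\<bar>(W *v u + U *v \<xi> + b) $ j\<bar> \<le> cat_inf_norm umax W U b"
proof -
  have u: "\<bar>u $ k\<bar> \<le> umax" for k
  proof -
    have "- umax \<le> u $ k \<and> u $ k \<le> umax" using assms(1) unfolding input_set_def by auto
    then show ?thesis by linarith
  qed
  have "\<bar>(W *v u) $ j\<bar> \<le> (\<Sum>k\<in>UNIV. \<bar>umax * W $ j $ k\<bar>)"
  proof -
    have "\<bar>(W *v u) $ j\<bar> = \<bar>\<Sum>k\<in>UNIV. W $ j $ k * u $ k\<bar>"
      by (simp add: matrix_vector_mult_def)
    also have "\<dots> \<le> (\<Sum>k\<in>UNIV. \<bar>W $ j $ k * u $ k\<bar>)" by (rule sum_abs)
    also have "\<dots> \<le> (\<Sum>k\<in>UNIV. \<bar>umax * W $ j $ k\<bar>)"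
    proof (rule sum_mono)
      fix k
      have "\<bar>W $ j $ k * u $ k\<bar> = \<bar>W $ j $ k\<bar> * \<bar>u $ k\<bar>" by (simp add: abs_mult)
      also have "\<dots> \<le> \<bar>W $ j $ k\<bar> * umax" by (rule mult_left_mono[OF u]) simp
      also have "\<dots> \<le> \<bar>umax * W $ j $ k\<bar>" by (simp add: abs_mult mult.commute mult_right_mono)
      finally show "\<bar>W $ j $ k * u $ k\<bar> \<le> \<bar>umax * W $ j $ k\<bar>" .
    qed
    finally show ?thesis .
  qed
  moreover have "\<bar>(U *v \<xi>) $ j\<bar> \<le> (\<Sum>l\<in>UNIV. \<bar>U $ j $ l\<bar>)"
  proof -
    have "\<bar>(U *v \<xi>) $ j\<bar> = \<bar>\<Sum>l\<in>UNIV. U $ j $ l * \<xi> $ l\<bar>"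
      by (simp add: matrix_vector_mult_def)
    also have "\<dots> \<le> (\<Sum>l\<in>UNIV. \<bar>U $ j $ l * \<xi> $ l\<bar>)" by (rule sum_abs)
    also have "\<dots> \<le> (\<Sum>l\<in>UNIV. \<bar>U $ j $ l\<bar>)"
    proof (rule sum_mono)
      fix l
      have "\<bar>U $ j $ l * \<xi> $ l\<bar> = \<bar>U $ j $ l\<bar> * \<bar>\<xi> $ l\<bar>" by (simp add: abs_mult)
      also have "\<dots> \<le> \<bar>U $ j $ l\<bar> * 1" by (rule mult_left_mono[OF assms(2)]) simp
      finally show "\<bar>U $ j $ l * \<xi> $ l\<bar> \<le> \<bar>U $ j $ l\<bar>" by simp
    qed
    finally show ?thesis .
  qed
  ultimately have "\<bar>(W *v u + U *v \<xi> + b) $ j\<bar> \<le> (\<Sum>k\<in>UNIV. \<bar>umax * W $ j $ k\<bar>) + (\<Sum>l\<in>UNIV. \<bar>U $ j $ l\<bar>) + \<bar>b $ j\<bar>"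
    by simp
  then show ?thesis using cat_inf_norm_ge[where umax=umax and W=W and U=U and b=b and j=j] by linarith
qed

lemma sg_bound:
  assumes "\<bar>t\<bar> \<le> c" shows "\<bar>sigma_g t\<bar> \<le> sigma_g c"
  using sigma_g_pos[of t] sigma_g_mono[of t c] assms by auto

definition xbar :: "('x::finite, 'u::finite) lstm \<Rightarrow> real \<Rightarrow> real" where
  "xbar N umax = sgbar_i N umax * scbar_c N umax / (1 - sgbar_f N umax)"

definition inv_set :: "('x::finite, 'u::finite) lstm \<Rightarrow> real \<Rightarrow> ((real^'x) \<times> (real^'x)) set" where
  "inv_set N umax = {(x, \<xi>). \<forall>j. \<bar>x $ j\<bar> \<le> xbar N umax \<and> \<bar>\<xi> $ j\<bar> \<le> 1}"

lemma sgbar_bounds: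
  "0 < sgbar_f N umax" "sgbar_f N umax < 1"
  "0 < sgbar_i N umax" "sgbar_i N umax < 1"
  "0 < sgbar_o N umax" "sgbar_o N umax < 1"
  unfolding sgbar_f_def sgbar_i_def sgbar_o_def by (auto simp: sigma_g_pos sigma_g_lt1)

lemma scbar_c_nonneg: "0 \<le> scbar_c N umax"
  unfolding scbar_c_def sigma_c_def using cat_inf_norm_nonneg by simp

lemma xbar_nonneg: "0 \<le> xbar N umax"
  unfolding xbar_def using sgbar_bounds[of N umax] scbar_c_nonneg[of N umax] by simp

lemma scbar_x_eq: "scbar_x N umax = sigma_c (xbar N umax)"
  unfolding scbar_x_def xbar_def ..

lemma scbar_x_nonneg: "0 \<le> scbar_x N umax"
  unfolding scbar_x_eq sigma_c_def using xbar_nonneg by simp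

lemma xbar_eq: "sgbar_f N umax * xbar N umax + sgbar_i N umax * scbar_c N umax = xbar N umax"
  unfolding xbar_def using sgbar_bounds[of N umax] by (simp add: field_simps)

lemma state_set_sub: "state_set N umax \<subseteq> inv_set N umax"
  unfolding state_set_def inv_set_def xbar_def by (auto simp: abs_le_iff less_imp_le)

lemma step_fst: "fst (lstm_step N u (x, \<xi>)) =
   vmap sigma_g (Wf N *v u + Uf N *v \<xi> + bf N) \<circ>\<^sub>H x
 + vmap sigma_g (Wi N *v u + Ui N *v \<xi> + bi N) \<circ>\<^sub>H vmap sigma_c (Wc N *v u + Uc N *v \<xi> + bc N)"
  unfolding lstm_step_def Let_def by simp

lemma step_snd: "snd (lstm_step N u (x, \<xi>)) =
   vmap sigma_g (Wo N *v u + Uo N *v \<xi> + bo N) \<circ>\<^sub>H vmap sigma_c (fst (lstm_step N u (x, \<xi>)))"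
  unfolding lstm_step_def Let_def by simp

lemma gate_bound:
  assumes "u \<in> input_set umax" "\<And>j. \<bar>\<xi> $ j\<bar> \<le> 1"
  shows "\<bar>vmap sigma_g (W *v u + U *v \<xi> + b) $ j\<bar> \<le> sigma_g (cat_inf_norm umax W U b)"
  using sg_bound[OF arg_bound[OF assms]] by simp

lemma cgate_bound:
  assumes "u \<in> input_set umax" "\<And>j. \<bar>\<xi> $ j\<bar> \<le> 1"
  shows "\<bar>vmap sigma_c (W *v u + U *v \<xi> + b) $ j\<bar> \<le> sigma_c (cat_inf_norm umax W U b)"
  using sigma_c_abs_le[OF arg_bound[OF assms]] by simp

lemma step_fst_bound:
  assumes "(x, \<xi>) \<in> inv_set N umax" "u \<in> input_set umax"
  shows "\<bar>fst (lstm_step N u (x, \<xi>)) $ j\<bar> \<le> xbar N umax"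
proof -
  have xi: "\<And>j. \<bar>\<xi> $ j\<bar> \<le> 1" and xj: "\<bar>x $ j\<bar> \<le> xbar N umax"
    using assms(1) unfolding inv_set_def by auto
  define a where "a = vmap sigma_g (Wf N *v u + Uf N *v \<xi> + bf N) $ j"
  define b where "b = vmap sigma_g (Wi N *v u + Ui N *v \<xi> + bi N) $ j"
  define c where "c = vmap sigma_c (Wc N *v u + Uc N *v \<xi> + bc N) $ j"
  have a: "\<bar>a\<bar> \<le> sgbar_f N umax" unfolding a_def sgbar_f_def by (rule gate_bound[OF assms(2) xi])
  have b: "\<bar>b\<bar> \<le> sgbar_i N umax" unfolding b_def sgbar_i_def by (rule gate_bound[OF assms(2) xi])
  have c: "\<bar>c\<bar> \<le> scbar_c N umax" unfolding c_def scbar_c_def by (rule cgate_bound[OF assms(2) xi])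
  have "\<bar>fst (lstm_step N u (x, \<xi>)) $ j\<bar> = \<bar>a * x $ j + b * c\<bar>"
    unfolding step_fst a_def b_def c_def by simp
  also have "\<dots> \<le> \<bar>a\<bar> * \<bar>x $ j\<bar> + \<bar>b\<bar> * \<bar>c\<bar>" by (simp add: abs_mult abs_triangle_ineq[THEN order_trans])
  also have "\<dots> \<le> sgbar_f N umax * xbar N umax + sgbar_i N umax * scbar_c N umax"
    using sgbar_bounds[of N umax] by (intro add_mono mult_mono a b c xj) auto
  also have "\<dots> = xbar N umax" by (rule xbar_eq)
  finally show ?thesis .
qed

lemma step_inv:
  assumes "s \<in> inv_set N umax" "u \<in> input_set umax"
  shows "lstm_step N u s \<in> inv_set N umax"
proof -
  obtain x \<xi> where s: "s = (x, \<xi>)" by fastforce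
  have xi: "\<And>j. \<bar>\<xi> $ j\<bar> \<le> 1" using assms(1) unfolding inv_set_def s by auto
  have "\<bar>snd (lstm_step N u (x, \<xi>)) $ j\<bar> \<le> 1" for j
  proof -
    have "\<bar>vmap sigma_g (Wo N *v u + Uo N *v \<xi> + bo N) $ j\<bar> \<le> 1"
      using sigma_g_pos sigma_g_lt1 by (simp add: less_imp_le)
    moreover have "\<bar>vmap sigma_c (fst (lstm_step N u (x, \<xi>))) $ j\<bar> \<le> 1"
      unfolding sigma_c_def using tanh_real_bounds by (simp add: abs_le_iff less_imp_le)
    ultimately show ?thesis unfolding step_snd
      by (simp add: abs_mult mult_le_one)
  qed
  then show ?thesis using step_fst_bound[OF assms(1)[unfolded s] assms(2)] unfolding s inv_set_def
    by (auto simp del: vmap_comp hadamard_comp)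
qed

lemma hadamard_diff: "a1 \<circ>\<^sub>H b1 - a2 \<circ>\<^sub>H b2 = a1 \<circ>\<^sub>H (b1 - b2) + b2 \<circ>\<^sub>H (a1 - a2)"
  by (simp add: vec_eq_iff algebra_simps)

lemma norm_prod_diff:
  fixes a1 a2 b1 b2 :: "real^'n::finite"
  assumes "\<And>j. \<bar>a1 $ j\<bar> \<le> A" "\<And>j. \<bar>b2 $ j\<bar> \<le> B"
  shows "norm (a1 \<circ>\<^sub>H b1 - a2 \<circ>\<^sub>H b2) \<le> A * norm (b1 - b2) + B * norm (a1 - a2)"
proof -
  have "norm (a1 \<circ>\<^sub>H b1 - a2 \<circ>\<^sub>H b2) \<le> norm (a1 \<circ>\<^sub>H (b1 - b2)) + norm (b2 \<circ>\<^sub>H (a1 - a2))"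
    unfolding hadamard_diff by (rule norm_triangle_ineq)
  also have "\<dots> \<le> A * norm (b1 - b2) + B * norm (a1 - a2)"
    by (intro add_mono norm_hadamard assms)
  finally show ?thesis .
qed

lemma arg_diff_bound:
  fixes W :: "real^'u::finite^'x::finite" and U :: "real^'x^'x"
  shows "norm ((W *v u1 + U *v \<xi>1 + b) - (W *v u2 + U *v \<xi>2 + b))
     \<le> mnorm2 U * norm (\<xi>1 - \<xi>2) + mnorm2 W * norm (u1 - u2)"
proof -
  have "(W *v u1 + U *v \<xi>1 + b) - (W *v u2 + U *v \<xi>2 + b) = U *v (\<xi>1 - \<xi>2) + W *v (u1 - u2)"
    by (simp add: algebra_simps)
  then show ?thesis
    by (metis add_mono mnorm2_bound norm_triangle_le)
qed

lemma gdiff: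
  fixes W :: "real^'u::finite^'x::finite" and U :: "real^'x^'x"
  shows "norm (vmap sigma_g (W *v u1 + U *v \<xi>1 + b) - vmap sigma_g (W *v u2 + U *v \<xi>2 + b))
     \<le> 1/4 * (mnorm2 U * norm (\<xi>1 - \<xi>2) + mnorm2 W * norm (u1 - u2))"
  by (rule order_trans[OF norm_vmap_lip[OF sigma_g_lip]]) (simp, rule mult_left_mono[OF arg_diff_bound], simp)

lemma cdiff:
  fixes W :: "real^'u::finite^'x::finite" and U :: "real^'x^'x"
  shows "norm (vmap sigma_c (W *v u1 + U *v \<xi>1 + b) - vmap sigma_c (W *v u2 + U *v \<xi>2 + b))
     \<le> 1 * (mnorm2 U * norm (\<xi>1 - \<xi>2) + mnorm2 W * norm (u1 - u2))"
  by (rule order_trans[OF norm_vmap_lip[OF sigma_c_lip]]) (simp, rule mult_left_mono[OF arg_diff_bound], simp)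

definition alpha :: "('x::finite, 'u::finite) lstm \<Rightarrow> real \<Rightarrow> real" where
  "alpha N umax = 1/4 * mnorm2 (Uf N) * xbar N umax + sgbar_i N umax * mnorm2 (Uc N)
              + 1/4 * mnorm2 (Ui N) * scbar_c N umax"

definition bx :: "('x::finite, 'u::finite) lstm \<Rightarrow> real \<Rightarrow> real" where
  "bx N umax = 1/4 * mnorm2 (Wf N) * xbar N umax + sgbar_i N umax * mnorm2 (Wc N)
              + 1/4 * mnorm2 (Wi N) * scbar_c N umax"

lemma step_fst_diff:
  assumes "(x1, \<xi>1) \<in> inv_set N umax" "(x2, \<xi>2) \<in> inv_set N umax"
    "u1 \<in> input_set umax" "u2 \<in> input_set umax"
  shows "norm (fst (lstm_step N u1 (x1, \<xi>1)) - fst (lstm_step N u2 (x2, \<xi>2)))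
    \<le> sgbar_f N umax * norm (x1 - x2) + alpha N umax * norm (\<xi>1 - \<xi>2) + bx N umax * norm (u1 - u2)"
proof -
  have xi1: "\<And>j. \<bar>\<xi>1 $ j\<bar> \<le> 1" and xi2: "\<And>j. \<bar>\<xi>2 $ j\<bar> \<le> 1" and x2: "\<And>j. \<bar>x2 $ j\<bar> \<le> xbar N umax"
    using assms(1,2) unfolding inv_set_def by auto
  define ex where "ex = norm (x1 - x2)"
  define e\<xi> where "e\<xi> = norm (\<xi>1 - \<xi>2)"
  define d where "d = norm (u1 - u2)"
  define f1 where "f1 = vmap sigma_g (Wf N *v u1 + Uf N *v \<xi>1 + bf N)"
  define f2 where "f2 = vmap sigma_g (Wf N *v u2 + Uf N *v \<xi>2 + bf N)"
  define i1 where "i1 = vmap sigma_g (Wi N *v u1 + Ui N *v \<xi>1 + bi N)"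
  define i2 where "i2 = vmap sigma_g (Wi N *v u2 + Ui N *v \<xi>2 + bi N)"
  define c1 where "c1 = vmap sigma_c (Wc N *v u1 + Uc N *v \<xi>1 + bc N)"
  define c2 where "c2 = vmap sigma_c (Wc N *v u2 + Uc N *v \<xi>2 + bc N)"
  have f1b: "\<And>j. \<bar>f1 $ j\<bar> \<le> sgbar_f N umax" unfolding f1_def sgbar_f_def by (rule gate_bound[OF assms(3) xi1])
  have i1b: "\<And>j. \<bar>i1 $ j\<bar> \<le> sgbar_i N umax" unfolding i1_def sgbar_i_def by (rule gate_bound[OF assms(3) xi1])
  have c2b: "\<And>j. \<bar>c2 $ j\<bar> \<le> scbar_c N umax" unfolding c2_def scbar_c_def by (rule cgate_bound[OF assms(4) xi2])
  have fd: "norm (f1 - f2) \<le> 1/4 * (mnorm2 (Uf N) * e\<xi> + mnorm2 (Wf N) * d)"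
    unfolding f1_def f2_def e\<xi>_def d_def by (rule gdiff)
  have id: "norm (i1 - i2) \<le> 1/4 * (mnorm2 (Ui N) * e\<xi> + mnorm2 (Wi N) * d)"
    unfolding i1_def i2_def e\<xi>_def d_def by (rule gdiff)
  have cd: "norm (c1 - c2) \<le> 1 * (mnorm2 (Uc N) * e\<xi> + mnorm2 (Wc N) * d)"
    unfolding c1_def c2_def e\<xi>_def d_def by (rule cdiff)
  have "fst (lstm_step N u1 (x1, \<xi>1)) - fst (lstm_step N u2 (x2, \<xi>2))
     = (f1 \<circ>\<^sub>H x1 - f2 \<circ>\<^sub>H x2) + (i1 \<circ>\<^sub>H c1 - i2 \<circ>\<^sub>H c2)"
    unfolding step_fst f1_def f2_def i1_def i2_def c1_def c2_def by simp
  then have "norm (fst (lstm_step N u1 (x1, \<xi>1)) - fst (lstm_step N u2 (x2, \<xi>2)))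
     \<le> norm (f1 \<circ>\<^sub>H x1 - f2 \<circ>\<^sub>H x2) + norm (i1 \<circ>\<^sub>H c1 - i2 \<circ>\<^sub>H c2)"
    by (simp add: norm_triangle_ineq)
  also have "\<dots> \<le> (sgbar_f N umax * ex + xbar N umax * norm (f1 - f2))
                + (sgbar_i N umax * norm (c1 - c2) + scbar_c N umax * norm (i1 - i2))"
    unfolding ex_def by (intro add_mono norm_prod_diff f1b x2 i1b c2b)
  also have "\<dots> \<le> (sgbar_f N umax * ex + xbar N umax * (1/4 * (mnorm2 (Uf N) * e\<xi> + mnorm2 (Wf N) * d)))
                + (sgbar_i N umax * (1 * (mnorm2 (Uc N) * e\<xi> + mnorm2 (Wc N) * d))
                   + scbar_c N umax * (1/4 * (mnorm2 (Ui N) * e\<xi> + mnorm2 (Wi N) * d)))"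
    using xbar_nonneg[of N umax] scbar_c_nonneg[of N umax] sgbar_bounds[of N umax]
    by (intro add_mono mult_left_mono fd id cd order_refl) auto
  also have "\<dots> = sgbar_f N umax * ex + alpha N umax * e\<xi> + bx N umax * d"
    unfolding alpha_def bx_def by (simp add: algebra_simps)
  finally show ?thesis unfolding ex_def e\<xi>_def d_def .
qed

definition a22 :: "('x::finite, 'u::finite) lstm \<Rightarrow> real \<Rightarrow> real" where
  "a22 N umax = alpha N umax * sgbar_o N umax + 1/4 * scbar_x N umax * mnorm2 (Uo N)"

definition bxi :: "('x::finite, 'u::finite) lstm \<Rightarrow> real \<Rightarrow> real" where
  "bxi N umax = sgbar_o N umax * bx N umax + 1/4 * scbar_x N umax * mnorm2 (Wo N)"

lemma step_snd_diff:
  assumes "(x1, \<xi>1) \<in> inv_set N umax" "(x2, \<xi>2) \<in> inv_set N umax"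
    "u1 \<in> input_set umax" "u2 \<in> input_set umax"
  shows "norm (snd (lstm_step N u1 (x1, \<xi>1)) - snd (lstm_step N u2 (x2, \<xi>2)))
    \<le> sgbar_o N umax * sgbar_f N umax * norm (x1 - x2) + a22 N umax * norm (\<xi>1 - \<xi>2) + bxi N umax * norm (u1 - u2)"
proof -
  have xi1: "\<And>j. \<bar>\<xi>1 $ j\<bar> \<le> 1" and xi2: "\<And>j. \<bar>\<xi>2 $ j\<bar> \<le> 1"
    using assms(1,2) unfolding inv_set_def by auto
  define ex where "ex = norm (x1 - x2)"
  define e\<xi> where "e\<xi> = norm (\<xi>1 - \<xi>2)"
  define d where "d = norm (u1 - u2)"
  define o1 where "o1 = vmap sigma_g (Wo N *v u1 + Uo N *v \<xi>1 + bo N)"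
  define o2 where "o2 = vmap sigma_g (Wo N *v u2 + Uo N *v \<xi>2 + bo N)"
  define p1 where "p1 = fst (lstm_step N u1 (x1, \<xi>1))"
  define p2 where "p2 = fst (lstm_step N u2 (x2, \<xi>2))"
  have o1b: "\<And>j. \<bar>o1 $ j\<bar> \<le> sgbar_o N umax" unfolding o1_def sgbar_o_def by (rule gate_bound[OF assms(3) xi1])
  have t2b: "\<bar>vmap sigma_c p2 $ j\<bar> \<le> scbar_x N umax" for j
    unfolding scbar_x_eq p2_def vmap_comp by (rule sigma_c_abs_le[OF step_fst_bound[OF assms(2,4)]])
  have od: "norm (o1 - o2) \<le> 1/4 * (mnorm2 (Uo N) * e\<xi> + mnorm2 (Wo N) * d)"
    unfolding o1_def o2_def e\<xi>_def d_def by (rule gdiff)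
  have td: "norm (vmap sigma_c p1 - vmap sigma_c p2) \<le> 1 * norm (p1 - p2)"
    by (rule norm_vmap_lip[OF sigma_c_lip]) simp
  have pd: "norm (p1 - p2) \<le> sgbar_f N umax * ex + alpha N umax * e\<xi> + bx N umax * d"
    unfolding p1_def p2_def ex_def e\<xi>_def d_def by (rule step_fst_diff[OF assms])
  have "norm (snd (lstm_step N u1 (x1, \<xi>1)) - snd (lstm_step N u2 (x2, \<xi>2)))
     = norm (o1 \<circ>\<^sub>H vmap sigma_c p1 - o2 \<circ>\<^sub>H vmap sigma_c p2)"
    unfolding step_snd o1_def o2_def p1_def p2_def ..
  also have "\<dots> \<le> sgbar_o N umax * norm (vmap sigma_c p1 - vmap sigma_c p2) + scbar_x N umax * norm (o1 - o2)"
    by (intro norm_prod_diff o1b t2b)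
  also have "\<dots> \<le> sgbar_o N umax * (sgbar_f N umax * ex + alpha N umax * e\<xi> + bx N umax * d)
       + scbar_x N umax * (1/4 * (mnorm2 (Uo N) * e\<xi> + mnorm2 (Wo N) * d))"
    using sgbar_bounds[of N umax] scbar_x_nonneg[of N umax] td pd
    by (intro add_mono mult_left_mono od) auto
  also have "\<dots> = sgbar_o N umax * sgbar_f N umax * ex + a22 N umax * e\<xi> + bxi N umax * d"
    unfolding a22_def bxi_def by (simp add: algebra_simps)
  finally show ?thesis unfolding ex_def e\<xi>_def d_def .
qed

lemma eig_char:
  fixes A :: "real^2^2" and z :: complex and v :: "complex^2"
  assumes "v \<noteq> 0" "(\<chi> i j. complex_of_real (A $ i $ j)) *v v = (\<chi> i. z * v $ i)"
  shows "(of_real (A$1$1) - z) * (of_real (A$2$2) - z) - of_real (A$1$2) * of_real (A$2$1) = 0"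
proof -
  let ?a = "complex_of_real (A$1$1)" and ?b = "complex_of_real (A$1$2)"
  let ?c = "complex_of_real (A$2$1)" and ?d = "complex_of_real (A$2$2)"
  have e1: "?a * v$1 + ?b * v$2 = z * v$1" and e2: "?c * v$1 + ?d * v$2 = z * v$2"
    using assms(2) unfolding vec_eq_iff by (auto simp: matrix_vector_mult_def sum_2 forall_2)
  have nz: "v$1 \<noteq> 0 \<or> v$2 \<noteq> 0" using assms(1) unfolding vec_eq_iff forall_2 by auto
  have "((?a - z) * (?d - z) - ?b * ?c) * v$1 = 0"
  proof -
    have "((?a - z) * (?d - z) - ?b * ?c) * v$1 = (?d - z) * (?a * v$1 + ?b * v$2 - z * v$1) - ?b * (?c * v$1 + ?d * v$2 - z * v$2)"
      by (simp add: algebra_simps)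
    then show ?thesis using e1 e2 by simp
  qed
  moreover have "((?a - z) * (?d - z) - ?b * ?c) * v$2 = 0"
  proof -
    have "((?a - z) * (?d - z) - ?b * ?c) * v$2 = (?a - z) * (?c * v$1 + ?d * v$2 - z * v$2) - ?c * (?a * v$1 + ?b * v$2 - z * v$1)"
      by (simp add: algebra_simps)
    then show ?thesis using e1 e2 by simp
  qed
  ultimately show ?thesis using nz by auto
qed

lemma eig_finite:
  fixes A :: "real^2^2"
  shows "finite {cmod z | z. \<exists>v::complex^2. v \<noteq> 0 \<and>
       (\<chi> i j. complex_of_real (A $ i $ j)) *v v = (\<chi> i. z * v $ i)}"
proof -
  let ?a = "complex_of_real (A$1$1)" and ?b = "complex_of_real (A$1$2)"
  let ?c = "complex_of_real (A$2$1)" and ?d = "complex_of_real (A$2$2)"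
  define p where "p = [: ?a * ?d - ?b * ?c, - (?a + ?d), 1 :]"
  have pz: "p \<noteq> 0" unfolding p_def by simp
  have "{z. \<exists>v::complex^2. v \<noteq> 0 \<and> (\<chi> i j. complex_of_real (A $ i $ j)) *v v = (\<chi> i. z * v $ i)}
     \<subseteq> {z. poly p z = 0}"
  proof
    fix z assume "z \<in> {z. \<exists>v::complex^2. v \<noteq> 0 \<and> (\<chi> i j. complex_of_real (A $ i $ j)) *v v = (\<chi> i. z * v $ i)}"
    then obtain v :: "complex^2" where "v \<noteq> 0" "(\<chi> i j. complex_of_real (A $ i $ j)) *v v = (\<chi> i. z * v $ i)" by auto
    from eig_char[OF this] show "z \<in> {z. poly p z = 0}" unfolding p_def by (simp add: algebra_simps)
  qed
  then have "finite {z. \<exists>v::complex^2. v \<noteq> 0 \<and> (\<chi> i j. complex_of_real (A $ i $ j)) *v v = (\<chi> i. z * v $ i)}"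
    using poly_roots_finite[OF pz] finite_subset by blast
  then have "finite (cmod ` {z. \<exists>v::complex^2. v \<noteq> 0 \<and> (\<chi> i j. complex_of_real (A $ i $ j)) *v v = (\<chi> i. z * v $ i)})"
    by simp
  moreover have "{cmod z | z. \<exists>v::complex^2. v \<noteq> 0 \<and>
       (\<chi> i j. complex_of_real (A $ i $ j)) *v v = (\<chi> i. z * v $ i)}
     = cmod ` {z. \<exists>v::complex^2. v \<noteq> 0 \<and> (\<chi> i j. complex_of_real (A $ i $ j)) *v v = (\<chi> i. z * v $ i)}"
    by auto
  ultimately show ?thesis by simp
qed

lemma eig_le_rho:
  fixes A :: "real^2^2"
  assumes "A$1$1 * vx + A$1$2 * vy = r * vx" "A$2$1 * vx + A$2$2 * vy = r * vy" "vx \<noteq> 0 \<or> vy \<noteq> 0"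
  shows "\<bar>r\<bar> \<le> spectral_radius A"
proof -
  define v :: "complex^2" where "v = (\<chi> i. if i = 1 then complex_of_real vx else complex_of_real vy)"
  have vx: "v$1 = vx" and vy: "v$2 = vy" unfolding v_def by auto
  have "v \<noteq> 0" using assms(3) vx vy by auto
  moreover have "(\<chi> i j. complex_of_real (A $ i $ j)) *v v = (\<chi> i. complex_of_real r * v $ i)"
  proof -
    have "complex_of_real (A$1$1 * vx + A$1$2 * vy) = complex_of_real (r * vx)"
         "complex_of_real (A$2$1 * vx + A$2$2 * vy) = complex_of_real (r * vy)"
      using assms(1,2) by simp_all
    then show ?thesis unfolding vec_eq_iff
      by (auto simp: matrix_vector_mult_def sum_2 forall_2 vx vy)
  qed
  ultimately have "cmod (complex_of_real r) \<in> {cmod z | z. \<exists>v::complex^2. v \<noteq> 0 \<and>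
       (\<chi> i j. complex_of_real (A $ i $ j)) *v v = (\<chi> i. z * v $ i)}" by blast
  then show ?thesis unfolding spectral_radius_def
    using Max_ge[OF eig_finite] by simp
qed

lemma rho_cond:
  fixes A :: "real^2^2"
  assumes "spectral_radius A < 1"
    and nn: "A$1$1 \<ge> 0" "A$1$2 \<ge> 0" "A$2$1 \<ge> 0" "A$2$2 \<ge> 0"
  shows "A$1$1 < 1 \<and> A$2$2 < 1 \<and> A$1$2 * A$2$1 < (1 - A$1$1) * (1 - A$2$2)"
proof -
  define a where "a = A$1$1" define b where "b = A$1$2"
  define c where "c = A$2$1" define d where "d = A$2$2"
  have abcd: "a \<ge> 0" "b \<ge> 0" "c \<ge> 0" "d \<ge> 0" using nn unfolding a_def b_def c_def d_def by auto
  show ?thesis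
  proof (cases "b = 0")
    case True
    have "\<bar>d\<bar> \<le> spectral_radius A"
      by (rule eig_le_rho[where vx=0 and vy=1]) (auto simp: d_def b_def[symmetric] True)
    moreover have "\<bar>a\<bar> \<le> spectral_radius A"
    proof (cases "a = d")
      case True then show ?thesis using \<open>\<bar>d\<bar> \<le> spectral_radius A\<close> by simp
    next
      case False
      show ?thesis
        by (rule eig_le_rho[where vx="a - d" and vy=c])
           (use False True in \<open>auto simp: a_def[symmetric] b_def[symmetric] c_def[symmetric] d_def[symmetric] algebra_simps\<close>)
    qed
    ultimately show ?thesis using assms(1) abcd True
      unfolding a_def[symmetric] b_def[symmetric] c_def[symmetric] d_def[symmetric]
      by (auto intro!: mult_pos_pos)
  next
    case False
    then have bp: "b > 0" using abcd by simp
    define D where "D = (a - d)^2 + 4 * b * c"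
    define s where "s = sqrt D"
    have D0: "D \<ge> 0" unfolding D_def using abcd by simp
    have s2: "s^2 = D" unfolding s_def using D0 by simp
    have s0: "s \<ge> 0" unfolding s_def using D0 by simp
    have sad: "\<bar>a - d\<bar> \<le> s" unfolding s_def
      by (rule real_le_rsqrt) (use abcd in \<open>simp add: D_def\<close>)
    define r where "r = ((a + d) + s) / 2"
    have "(r - a) * (r - d) = b * c"
    proof -
      have "(r - a) * (r - d) = (s^2 - (a - d)^2) / 4" unfolding r_def by (simp add: field_simps power2_eq_square)
      then show ?thesis using s2 unfolding D_def by simp
    qed
    then have "\<bar>r\<bar> \<le> spectral_radius A"
      using bp
      by (intro eig_le_rho[where vx=b and vy="r - a"])
         (auto simp: a_def[symmetric] b_def[symmetric] c_def[symmetric] d_def[symmetric] algebra_simps)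
    then have r1: "r < 1" using assms(1) by simp
    have ra: "a \<le> r" "d \<le> r" using sad unfolding r_def by auto
    then have a1: "a < 1" "d < 1" using r1 by auto
    have "s < 2 - a - d" using r1 unfolding r_def by simp
    then have "s^2 < (2 - a - d)^2" using s0 by (intro power_strict_mono) auto
    then have "(a - d)^2 + 4 * b * c < (2 - a - d)^2" using s2 unfolding D_def by simp
    then have "b * c < (1 - a) * (1 - d)" by (simp add: power2_eq_square algebra_simps)
    then show ?thesis using a1 unfolding a_def b_def c_def d_def by simp
  qed
qed

lemma weights:
  fixes a b c d :: real
  assumes "a \<ge> 0" "b \<ge> 0" "c \<ge> 0" "d \<ge> 0" "a < 1" "d < 1" "b * c < (1 - a) * (1 - d)"
  shows "\<exists>p1 p2 lam. p1 > 0 \<and> p2 > 0 \<and> 0 < lam \<and> lam < 1 \<and> p1 * a + p2 * c \<le> lam * p1 \<and> p1 * b + p2 * d \<le> lam * p2"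
proof -
  define g where "g = (1 - a) * (1 - d) - b * c"
  have g0: "g > 0" using assms unfolding g_def by simp
  define \<delta> where "\<delta> = g / (2 * (c + 1))"
  have \<delta>0: "\<delta> > 0" unfolding \<delta>_def using g0 assms by simp
  have \<delta>c: "\<delta> * c < g"
  proof -
    have "\<delta> * c = g * (c / (2 * (c + 1)))" unfolding \<delta>_def by simp
    also have "\<dots> < g * 1" using g0 assms(3) by (intro mult_strict_left_mono) (auto simp: field_simps)
    finally show ?thesis by simp
  qed
  define p1 where "p1 = 1 - d" define p2 where "p2 = b + \<delta>"
  define m1 where "m1 = p1 * (1 - a) - p2 * c"
  define m2 where "m2 = p2 * (1 - d) - p1 * b"
  have p1: "p1 > 0" "p2 > 0" unfolding p1_def p2_def using assms \<delta>0 by auto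
  have m1: "m1 > 0" using \<delta>c unfolding m1_def p1_def p2_def g_def by (simp add: algebra_simps)
  have m2: "m2 > 0" unfolding m2_def p1_def p2_def using \<delta>0 assms by (simp add: algebra_simps)
  define lam where "lam = max (1/2) (max (1 - m1/p1) (1 - m2/p2))"
  have l0: "0 < lam" unfolding lam_def by simp
  have l1: "lam < 1" unfolding lam_def using m1 m2 p1 by auto
  have "p1 * a + p2 * c = p1 * (1 - m1/p1)" unfolding m1_def using p1 by (simp add: field_simps)
  also have "\<dots> \<le> lam * p1" using p1 unfolding lam_def by (simp add: mult.commute)
  finally have h1: "p1 * a + p2 * c \<le> lam * p1" .
  have "p1 * b + p2 * d = p2 * (1 - m2/p2)" unfolding m2_def using p1 by (simp add: field_simps)
  also have "\<dots> \<le> lam * p2" using p1 unfolding lam_def by (simp add: mult.commute)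
  finally have h2: "p1 * b + p2 * d \<le> lam * p2" .
  show ?thesis using p1 l0 l1 h1 h2 by blast
qed

lemma A_delta_entries:
  "A_delta N umax $ 1 $ 1 = sgbar_f N umax"
  "A_delta N umax $ 1 $ 2 = alpha N umax"
  "A_delta N umax $ 2 $ 1 = sgbar_o N umax * sgbar_f N umax"
  "A_delta N umax $ 2 $ 2 = a22 N umax"
  unfolding A_delta_def Let_def alpha_def a22_def xbar_def by simp_all

lemma coeff_nonneg: "alpha N umax \<ge> 0" "a22 N umax \<ge> 0" "bx N umax \<ge> 0" "bxi N umax \<ge> 0"
  using sgbar_bounds[of N umax] scbar_c_nonneg[of N umax] xbar_nonneg[of N umax] scbar_x_nonneg[of N umax]
  unfolding alpha_def a22_def bx_def bxi_def
  by (auto intro!: add_nonneg_nonneg mult_nonneg_nonneg mnorm2_nonneg)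

lemma traj_inv:
  assumes "s0 \<in> inv_set N umax" "\<forall>h. u h \<in> input_set umax"
  shows "lstm_traj N u s0 k \<in> inv_set N umax"
  by (induction k) (use assms in \<open>auto intro: step_inv\<close>)

lemma input_norm:
  fixes u :: "real^'u::finite"
  assumes u: "u \<in> input_set umax"
  shows "norm u \<le> real CARD('u) * umax"
proof -
  have "norm u \<le> (\<Sum>i\<in>UNIV. \<bar>u $ i\<bar>)" by (rule norm_le_l1_cart)
  also have "\<dots> \<le> (\<Sum>i\<in>(UNIV::'u set). umax)"
  proof (rule sum_mono)
    fix i have "- umax \<le> u $ i \<and> u $ i \<le> umax" using u unfolding input_set_def by auto
    then show "\<bar>u $ i\<bar> \<le> umax" by linarith
  qed
  finally show ?thesis by simp
qed

lemma E_bound: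
  fixes N :: "('x::finite, 'u::finite) lstm"
  assumes s1: "s1 \<in> inv_set N umax" and s2: "s2 \<in> inv_set N umax"
    and u1: "\<forall>h. u1 h \<in> input_set umax" and u2: "\<forall>h. u2 h \<in> input_set umax"
    and D: "\<forall>h. norm (u1 h - u2 h) \<le> D"
    and p: "p1 \<ge> 0" "p2 \<ge> 0" and lam: "0 \<le> lam" "lam < 1"
    and c1: "p1 * sgbar_f N umax + p2 * (sgbar_o N umax * sgbar_f N umax) \<le> lam * p1"
    and c2: "p1 * alpha N umax + p2 * a22 N umax \<le> lam * p2"
  shows "p1 * norm (fst (lstm_traj N u1 s1 k) - fst (lstm_traj N u2 s2 k))
       + p2 * norm (snd (lstm_traj N u1 s1 k) - snd (lstm_traj N u2 s2 k))
     \<le> lam ^ k * (p1 * norm (fst s1 - fst s2) + p2 * norm (snd s1 - snd s2))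
       + (p1 * bx N umax + p2 * bxi N umax) * D / (1 - lam)"
proof (induction k)
  case 0
  have D0: "D \<ge> 0" using D[rule_format, of 0] norm_ge_zero[of "u1 0 - u2 0"] by linarith
  have "0 \<le> (p1 * bx N umax + p2 * bxi N umax) * D / (1 - lam)"
    using p D0 lam coeff_nonneg[of N umax] by (auto intro!: divide_nonneg_pos mult_nonneg_nonneg add_nonneg_nonneg)
  then show ?case by simp
next
  case (Suc k)
  define K where "K = p1 * bx N umax + p2 * bxi N umax"
  have K0: "K \<ge> 0" unfolding K_def using p coeff_nonneg[of N umax] by simp
  have D0: "D \<ge> 0" using D[rule_format, of 0] norm_ge_zero[of "u1 0 - u2 0"] by linarith
  define T1 where "T1 = lstm_traj N u1 s1 k"
  define T2 where "T2 = lstm_traj N u2 s2 k"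
  define ex where "ex = norm (fst T1 - fst T2)"
  define e\<xi> where "e\<xi> = norm (snd T1 - snd T2)"
  define d where "d = norm (u1 k - u2 k)"
  define E0 where "E0 = p1 * norm (fst s1 - fst s2) + p2 * norm (snd s1 - snd s2)"
  have IH: "p1 * ex + p2 * e\<xi> \<le> lam ^ k * E0 + K * D / (1 - lam)"
    using Suc.IH unfolding ex_def e\<xi>_def T1_def T2_def E0_def K_def .
  have i1: "(fst T1, snd T1) \<in> inv_set N umax" unfolding T1_def using traj_inv[OF s1 u1] by simp
  have i2: "(fst T2, snd T2) \<in> inv_set N umax" unfolding T2_def using traj_inv[OF s2 u2] by simp
  have t1: "lstm_traj N u1 s1 (Suc k) = lstm_step N (u1 k) (fst T1, snd T1)" unfolding T1_def by simp
  have t2: "lstm_traj N u2 s2 (Suc k) = lstm_step N (u2 k) (fst T2, snd T2)" unfolding T2_def by simp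
  have fx: "norm (fst (lstm_traj N u1 s1 (Suc k)) - fst (lstm_traj N u2 s2 (Suc k)))
     \<le> sgbar_f N umax * ex + alpha N umax * e\<xi> + bx N umax * d"
    unfolding t1 t2 ex_def e\<xi>_def d_def by (rule step_fst_diff[OF i1 i2 u1[rule_format] u2[rule_format]])
  have fxi: "norm (snd (lstm_traj N u1 s1 (Suc k)) - snd (lstm_traj N u2 s2 (Suc k)))
     \<le> sgbar_o N umax * sgbar_f N umax * ex + a22 N umax * e\<xi> + bxi N umax * d"
    unfolding t1 t2 ex_def e\<xi>_def d_def by (rule step_snd_diff[OF i1 i2 u1[rule_format] u2[rule_format]])
  have dD: "d \<le> D" unfolding d_def using D by simp
  have "p1 * norm (fst (lstm_traj N u1 s1 (Suc k)) - fst (lstm_traj N u2 s2 (Suc k)))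
       + p2 * norm (snd (lstm_traj N u1 s1 (Suc k)) - snd (lstm_traj N u2 s2 (Suc k)))
     \<le> p1 * (sgbar_f N umax * ex + alpha N umax * e\<xi> + bx N umax * d)
       + p2 * (sgbar_o N umax * sgbar_f N umax * ex + a22 N umax * e\<xi> + bxi N umax * d)"
    using p fx fxi by (intro add_mono mult_left_mono) auto
  also have "\<dots> = (p1 * sgbar_f N umax + p2 * (sgbar_o N umax * sgbar_f N umax)) * ex
      + (p1 * alpha N umax + p2 * a22 N umax) * e\<xi> + K * d"
    unfolding K_def by (simp add: algebra_simps)
  also have "\<dots> \<le> (lam * p1) * ex + (lam * p2) * e\<xi> + K * D"
    using c1 c2 K0 dD by (intro add_mono mult_right_mono mult_left_mono) (auto simp: ex_def e\<xi>_def)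
  also have "\<dots> = lam * (p1 * ex + p2 * e\<xi>) + K * D" by (simp add: algebra_simps)
  also have "\<dots> \<le> lam * (lam ^ k * E0 + K * D / (1 - lam)) + K * D"
    using IH lam by (simp add: mult_left_mono)
  also have "\<dots> = lam ^ Suc k * E0 + K * D / (1 - lam)"
    using lam by (simp add: field_simps)
  finally show ?case unfolding E0_def K_def .
qed

lemma pair_diff_split:
  fixes z :: "'a::real_normed_vector \<times> 'b::real_normed_vector"
  shows "norm z \<le> norm (fst z) + norm (snd z)" "norm (fst z) \<le> norm z" "norm (snd z) \<le> norm z"
  using norm_Pair_le[of "fst z" "snd z"] norm_fst_le[of "fst z" "snd z"] norm_snd_le[of "snd z" "fst z"]
  by simp_all

theorem theorem2:
  fixes N :: "('x::finite, 'u::finite) lstm" and umax :: real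
  assumes "spectral_radius (A_delta N umax) < 1"
  shows "\<exists>\<beta> \<gamma>. class_KL \<beta> \<and> class_Kinf \<gamma> \<and>
    (\<forall>k \<chi>01 \<chi>02 u1 u2.
       \<chi>01 \<in> state_set N umax \<longrightarrow> \<chi>02 \<in> state_set N umax \<longrightarrow>
       (\<forall>h. u1 h \<in> input_set umax) \<longrightarrow> (\<forall>h. u2 h \<in> input_set umax) \<longrightarrow>
       norm (lstm_traj N u1 \<chi>01 k - lstm_traj N u2 \<chi>02 k)
         \<le> \<beta> (norm (\<chi>01 - \<chi>02)) k + \<gamma> (SUP h. norm (u1 h - u2 h)))"
proof -
  have nn: "A_delta N umax $ 1 $ 1 \<ge> 0" "A_delta N umax $ 1 $ 2 \<ge> 0"
           "A_delta N umax $ 2 $ 1 \<ge> 0" "A_delta N umax $ 2 $ 2 \<ge> 0"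
    unfolding A_delta_entries using sgbar_bounds[of N umax] coeff_nonneg[of N umax] by auto
  from rho_cond[OF assms nn] have rc:
    "sgbar_f N umax < 1" "a22 N umax < 1"
    "alpha N umax * (sgbar_o N umax * sgbar_f N umax) < (1 - sgbar_f N umax) * (1 - a22 N umax)"
    unfolding A_delta_entries by auto
  obtain p1 p2 lam where pl: "p1 > 0" "p2 > 0" "0 < lam" "lam < 1"
    "p1 * sgbar_f N umax + p2 * (sgbar_o N umax * sgbar_f N umax) \<le> lam * p1"
    "p1 * alpha N umax + p2 * a22 N umax \<le> lam * p2"
    using weights[OF _ _ _ _ rc] nn unfolding A_delta_entries by blast
  define pm where "pm = min p1 p2"
  have pm: "pm > 0" "pm \<le> p1" "pm \<le> p2" unfolding pm_def using pl by auto
  define C where "C = (p1 + p2) / pm"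
  have C: "C > 0" unfolding C_def using pl pm by simp
  define K where "K = p1 * bx N umax + p2 * bxi N umax"
  have K0: "K \<ge> 0" unfolding K_def using pl coeff_nonneg[of N umax] by simp
  define G where "G = K / ((1 - lam) * pm) + 1"
  have "K / ((1 - lam) * pm) \<ge> 0" using K0 pl pm by (intro divide_nonneg_pos) auto
  then have G: "G > 0" unfolding G_def by simp
  define \<beta> where "\<beta> = (\<lambda>s (k::nat). C * lam ^ k * s)"
  define \<gamma> where "\<gamma> = (\<lambda>r::real. G * r)"
  have KL: "class_KL \<beta>"
    unfolding class_KL_def class_K_def \<beta>_def
  proof (intro conjI allI impI)
    fix t :: nat
    show "continuous_on {0..} (\<lambda>s. C * lam ^ t * s)" by (intro continuous_intros)
    show "strict_mono_on {0..} (\<lambda>s. C * lam ^ t * s)"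
      unfolding strict_mono_on_def using C pl by auto
    show "C * lam ^ t * 0 = 0" by simp
  next
    fix s :: real assume s: "s \<ge> 0"
    show "antimono (\<lambda>t. C * lam ^ t * s)"
      unfolding antimono_def using C pl s
      by (auto intro!: mult_right_mono mult_left_mono power_decreasing)
    have "(\<lambda>t. C * lam ^ t * s) \<longlonglongrightarrow> C * 0 * s"
      using pl by (intro tendsto_intros LIMSEQ_power_zero) auto
    then show "(\<lambda>t. C * lam ^ t * s) \<longlonglongrightarrow> 0" by simp
  qed
  have Kinf: "class_Kinf \<gamma>"
    unfolding class_Kinf_def class_K_def \<gamma>_def
  proof (intro conjI)
    show "continuous_on {0..} ((*) G)" by (intro continuous_intros)
    show "strict_mono_on {0..} ((*) G)" unfolding strict_mono_on_def using G by auto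
    show "G * 0 = 0" by simp
    show "filterlim ((*) G) at_top at_top"
      using filterlim_tendsto_pos_mult_at_top[OF tendsto_const G filterlim_ident] by simp
  qed
  have main: "norm (lstm_traj N u1 \<chi>01 k - lstm_traj N u2 \<chi>02 k)
         \<le> \<beta> (norm (\<chi>01 - \<chi>02)) k + \<gamma> (SUP h. norm (u1 h - u2 h))"
    if s1: "\<chi>01 \<in> state_set N umax" and s2: "\<chi>02 \<in> state_set N umax"
      and u1: "\<forall>h. u1 h \<in> input_set umax" and u2: "\<forall>h. u2 h \<in> input_set umax" for k \<chi>01 \<chi>02 u1 u2
  proof -
    define D where "D = (SUP h. norm (u1 h - u2 h))"
    have bdd: "bdd_above (range (\<lambda>h. norm (u1 h - u2 h)))"
    proof (rule bdd_aboveI2)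
      fix h
      have "norm (u1 h - u2 h) \<le> norm (u1 h) + norm (u2 h)" by (rule norm_triangle_ineq4)
      also have "\<dots> \<le> real CARD('u) * umax + real CARD('u) * umax"
        using input_norm u1 u2 by (intro add_mono) auto
      finally show "norm (u1 h - u2 h) \<le> real CARD('u) * umax + real CARD('u) * umax" .
    qed
    have Dh: "\<forall>h. norm (u1 h - u2 h) \<le> D" unfolding D_def using cSUP_upper[OF _ bdd] by auto
    have D0: "D \<ge> 0" using Dh[rule_format, of 0] norm_ge_zero[of "u1 0 - u2 0"] by linarith
    have i1: "\<chi>01 \<in> inv_set N umax" and i2: "\<chi>02 \<in> inv_set N umax" using s1 s2 state_set_sub by auto
    define Z where "Z = lstm_traj N u1 \<chi>01 k - lstm_traj N u2 \<chi>02 k"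
    define s where "s = norm (\<chi>01 - \<chi>02)"
    have Eb: "p1 * norm (fst Z) + p2 * norm (snd Z)
       \<le> lam ^ k * (p1 * norm (fst \<chi>01 - fst \<chi>02) + p2 * norm (snd \<chi>01 - snd \<chi>02)) + K * D / (1 - lam)"
      unfolding Z_def K_def fst_diff snd_diff
      by (rule E_bound[OF i1 i2 u1 u2 Dh]) (use pl in auto)
    have "p1 * norm (fst \<chi>01 - fst \<chi>02) + p2 * norm (snd \<chi>01 - snd \<chi>02) \<le> p1 * s + p2 * s"
      unfolding s_def using pair_diff_split(2,3)[of "\<chi>01 - \<chi>02"] pl
      by (intro add_mono mult_left_mono) auto
    then have E0: "lam ^ k * (p1 * norm (fst \<chi>01 - fst \<chi>02) + p2 * norm (snd \<chi>01 - snd \<chi>02)) \<le> lam ^ k * ((p1 + p2) * s)"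
      using pl by (intro mult_left_mono) (auto simp: algebra_simps)
    have "pm * norm Z \<le> pm * (norm (fst Z) + norm (snd Z))"
      using pair_diff_split(1)[of Z] pm by (intro mult_left_mono) auto
    also have "\<dots> \<le> p1 * norm (fst Z) + p2 * norm (snd Z)"
      using pm by (simp add: distrib_left add_mono mult_right_mono)
    also have "\<dots> \<le> lam ^ k * ((p1 + p2) * s) + K * D / (1 - lam)" using Eb E0 by linarith
    finally have "pm * norm Z \<le> lam ^ k * ((p1 + p2) * s) + K * D / (1 - lam)" .
    then have "norm Z \<le> (lam ^ k * ((p1 + p2) * s) + K * D / (1 - lam)) / pm"
      using pm by (simp add: field_simps)
    also have "\<dots> = C * lam ^ k * s + (K / ((1 - lam) * pm)) * D"
      unfolding C_def using pm pl by (simp add: field_simps)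
    also have "\<dots> \<le> C * lam ^ k * s + G * D"
      unfolding G_def using D0 by (simp add: distrib_right)
    finally show ?thesis unfolding Z_def s_def D_def \<beta>_def \<gamma>_def .
  qed
  show ?thesis using KL Kinf main by blast
qed

end
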